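(* With the notation of the context, assume that $L$ is nonresonant in $X_{N,T}$, $X_{D,T}$, $X_{M_1,T}$ and $X_{M_2,T}$, that $\widetilde L$ is nonresonant in $X_{N,2T}$ and $X_{D,2T}$, and that $\widetilde{\widetilde L}$ is nonresonant in $X_{P,4T}$. Then for all $(t,s)\in I\times I$, \[G_P[4T](t,s)=\tfrac14\big(G_N[T](t,s)+G_D[T](t,s)+G_{M_1}[T](t,s)+G_{M_2}[T](t,s)\big).\]
   Context: Fix $n\ge 1$, $T>0$, $I=[0,T]$, $J=[0,2T]$. $W^{2n,1}(K)$: $u\in C^{2n-1}(K)$ with $u^{(2n-1)}$ absolutely continuous. Let $a_0,\dots,a_{2n-1}\in L^{\alpha}(I)$, $\alpha\ge1$, $Lu=u^{(2n)}+\sum_{k=0}^{2n-1}a_ku^{(k)}$ on $I$. $\widetilde L u=u^{(2n)}+\sum_{k=0}^{n-1}(\hat a_{2k+1}u^{(2k+1)}+\tilde a_{2k}u^{(2k)})$ on $J$, where $\tilde a_{2k}=a_{2k}$, $\hat a_{2k+1}=a_{2k+1}$ on $I$, and $\tilde a_{2k}(t)=a_{2k}(2T-t)$, $\hat a_{2k+1}(t)=-a_{2k+1}(2T-t)$ for $t\in(T,2T]$; $\widetilde{\widetilde L}$ on $[0,4T]$ is obtained by the same construction from $\widetilde L$ (reflection about $2T$). Nonresonance of $M$ in $X$: $Mu=0$ a.e., $u\in X$ implies $u\equiv0$; the Green's function $G$ then gives the unique solution $u(t)=\int G(t,s)\sigma(s)ds$ of $Mu=\sigma$, $u\in X$. Spaces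 ($k=0,\dots,n-1$ unless stated): $X_{N,T}$: $u^{(2k+1)}(0)=u^{(2k+1)}(T)=0$; $X_{D,T}$: $u^{(2k)}(0)=u^{(2k)}(T)=0$; $X_{M_1,T}$: $u^{(2k+1)}(0)=u^{(2k)}(T)=0$; $X_{M_2,T}$: $u^{(2k)}(0)=u^{(2k+1)}(T)=0$ (all in $W^{2n,1}(I)$); $X_{N,2T}$, $X_{D,2T}$: the analogous Neumann/Dirichlet conditions at $0$ and $2T$ in $W^{2n,1}(J)$; $X_{P,4T}=\{u\in W^{2n,1}([0,4T]): u^{(k)}(0)=u^{(k)}(4T),\ k=0,\dots,2n-1\}$. $G_N[T],G_D[T],G_{M_1}[T],G_{M_2}[T]$ are the Green's functions of $L$ on $X_{N,T},X_{D,T},X_{M_1,T},X_{M_2,T}$, and $G_P[4T]$ that of $\widetilde{\widetilde L}$ on $X_{P,4T}$. *)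

theory Defs
  imports "HOL-Analysis.Analysis"
begin

definition abs_cont_on :: "real \<Rightarrow> real \<Rightarrow> (real \<Rightarrow> real) \<Rightarrow> bool" where
  "abs_cont_on lo hi f \<longleftrightarrow>
     (\<forall>\<epsilon>>0. \<exists>\<delta>>0. \<forall>(N::nat) (x::nat \<Rightarrow> real) (y::nat \<Rightarrow> real).
        (\<forall>i<N. lo \<le> x i \<and> x i \<le> y i \<and> y i \<le> hi) \<and>
        (\<forall>i<N. \<forall>j<N. i \<noteq> j \<longrightarrow> y i \<le> x j \<or> y j \<le> x i) \<and>
        (\<Sum>i<N. y i - x i) < \<delta>
        \<longrightarrow> (\<Sum>i<N. \<bar>f (y i) - f (x i)\<bar>) < \<epsilon>)"

text \<open>Membership in W^{m,1}([lo,hi]) (here m = 2n), witnessed by the family D of derivatives: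
  D 0 = u on the interval, D k is the k-th derivative (within the interval) for k \<le> m-1,
  all of them continuous (so u \<in> C^{m-1}), and D (m-1) absolutely continuous.\<close>
definition W_space :: "nat \<Rightarrow> real \<Rightarrow> real \<Rightarrow> (real \<Rightarrow> real) \<Rightarrow> (nat \<Rightarrow> real \<Rightarrow> real) \<Rightarrow> bool" where
  "W_space m lo hi u D \<longleftrightarrow>
     (\<forall>t\<in>{lo..hi}. D 0 t = u t) \<and>
     (\<forall>k<m. continuous_on {lo..hi} (D k)) \<and>
     (\<forall>k. Suc k < m \<longrightarrow> (\<forall>t\<in>{lo..hi}. (D k has_real_derivative D (Suc k) t) (at t within {lo..hi}))) \<and>
     abs_cont_on lo hi (D (m - 1))"

text \<open>M u = \<sigma> a.e. on [lo,hi], where M u = u^{(m)} + \<Sum>_{k<m} c_k u^{(k)}; u^{(m)} is the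
  (a.e. existing) derivative of the absolutely continuous function u^{(m-1)} = D (m-1).\<close>
definition solves_ae :: "(nat \<Rightarrow> real \<Rightarrow> real) \<Rightarrow> nat \<Rightarrow> real \<Rightarrow> real \<Rightarrow> (nat \<Rightarrow> real \<Rightarrow> real)
    \<Rightarrow> (real \<Rightarrow> real) \<Rightarrow> bool" where
  "solves_ae c m lo hi D \<sigma> \<longleftrightarrow>
     (AE t in lborel. t \<in> {lo..hi} \<longrightarrow>
        (\<exists>d. (D (m - 1) has_real_derivative d) (at t within {lo..hi}) \<and>
             d + (\<Sum>k<m. c k t * D k t) = \<sigma> t))"

definition bc_N :: "nat \<Rightarrow> real \<Rightarrow> real \<Rightarrow> (nat \<Rightarrow> real \<Rightarrow> real) \<Rightarrow> bool" where
  "bc_N n lo hi D \<longleftrightarrow> (\<forall>k<n. D (2*k+1) lo = 0 \<and> D (2*k+1) hi = 0)"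
definition bc_D :: "nat \<Rightarrow> real \<Rightarrow> real \<Rightarrow> (nat \<Rightarrow> real \<Rightarrow> real) \<Rightarrow> bool" where
  "bc_D n lo hi D \<longleftrightarrow> (\<forall>k<n. D (2*k) lo = 0 \<and> D (2*k) hi = 0)"
definition bc_M1 :: "nat \<Rightarrow> real \<Rightarrow> real \<Rightarrow> (nat \<Rightarrow> real \<Rightarrow> real) \<Rightarrow> bool" where
  "bc_M1 n lo hi D \<longleftrightarrow> (\<forall>k<n. D (2*k+1) lo = 0 \<and> D (2*k) hi = 0)"
definition bc_M2 :: "nat \<Rightarrow> real \<Rightarrow> real \<Rightarrow> (nat \<Rightarrow> real \<Rightarrow> real) \<Rightarrow> bool" where
  "bc_M2 n lo hi D \<longleftrightarrow> (\<forall>k<n. D (2*k) lo = 0 \<and> D (2*k+1) hi = 0)"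
definition bc_P :: "nat \<Rightarrow> real \<Rightarrow> real \<Rightarrow> (nat \<Rightarrow> real \<Rightarrow> real) \<Rightarrow> bool" where
  "bc_P n lo hi D \<longleftrightarrow> (\<forall>k<2*n. D k lo = D k hi)"

definition nonresonant :: "(nat \<Rightarrow> real \<Rightarrow> real) \<Rightarrow> nat \<Rightarrow> real \<Rightarrow> real
    \<Rightarrow> ((nat \<Rightarrow> real \<Rightarrow> real) \<Rightarrow> bool) \<Rightarrow> bool" where
  "nonresonant c m lo hi bc \<longleftrightarrow>
     (\<forall>u D. W_space m lo hi u D \<and> bc D \<and> solves_ae c m lo hi D (\<lambda>_. 0)
        \<longrightarrow> (\<forall>t\<in>{lo..hi}. u t = 0))"

definition is_green :: "(nat \<Rightarrow> real \<Rightarrow> real) \<Rightarrow> nat \<Rightarrow> real \<Rightarrow> real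
    \<Rightarrow> ((nat \<Rightarrow> real \<Rightarrow> real) \<Rightarrow> bool) \<Rightarrow> (real \<Rightarrow> real \<Rightarrow> real) \<Rightarrow> bool" where
  "is_green c m lo hi bc G \<longleftrightarrow>
     continuous_on ({lo..hi} \<times> {lo..hi}) (\<lambda>(t, s). G t s) \<and>
     (\<forall>\<sigma>. \<sigma> absolutely_integrable_on {lo..hi} \<longrightarrow>
        (\<exists>D. W_space m lo hi (\<lambda>t. integral {lo..hi} (\<lambda>s. G t s * \<sigma> s)) D \<and> bc D \<and>
             solves_ae c m lo hi D \<sigma>))"

definition refl_coeff :: "real \<Rightarrow> (nat \<Rightarrow> real \<Rightarrow> real) \<Rightarrow> nat \<Rightarrow> real \<Rightarrow> real" where
  "refl_coeff T c k t = (if t \<le> T then c k t else (-1) ^ k * c k (2 * T - t))"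

definition in_Lp :: "real \<Rightarrow> real \<Rightarrow> real \<Rightarrow> (real \<Rightarrow> real) \<Rightarrow> bool" where
  "in_Lp p lo hi f \<longleftrightarrow> f measurable_on {lo..hi} \<and> (\<lambda>t. \<bar>f t\<bar> powr p) integrable_on {lo..hi}"

end

theory Submission
  imports Defs
begin

definition goodfam :: "real \<Rightarrow> real \<Rightarrow> nat \<Rightarrow> (nat \<Rightarrow> real) \<Rightarrow> (nat \<Rightarrow> real) \<Rightarrow> bool" where
  "goodfam a b N x y \<longleftrightarrow> (\<forall>i<N. a \<le> x i \<and> x i \<le> y i \<and> y i \<le> b) \<and>
        (\<forall>i<N. \<forall>j<N. i \<noteq> j \<longrightarrow> y i \<le> x j \<or> y j \<le> x i)"

lemma ac_alt: "abs_cont_on a b f \<longleftrightarrow> (\<forall>\<epsilon>>0. \<exists>\<delta>>0. \<forall>N x y. goodfam a b N x y \<and> (\<Sum>i<N. y i - x i) < \<delta>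
        \<longrightarrow> (\<Sum>i<N. \<bar>f (y i) - f (x i)\<bar>) < \<epsilon>)"
  unfolding abs_cont_on_def goodfam_def by (simp only: conj_assoc)

lemma ac_get:
  assumes "abs_cont_on a b f" "\<epsilon> > 0"
  obtains \<delta> where "\<delta> > 0" "\<And>N x y. goodfam a b N x y \<Longrightarrow> (\<Sum>i<N. y i - x i) < \<delta>
        \<Longrightarrow> (\<Sum>i<N. \<bar>f (y i) - f (x i)\<bar>) < \<epsilon>"
proof -
  from assms(1)[unfolded ac_alt, rule_format, OF assms(2)]
  obtain \<delta> where "\<delta> > 0" "\<forall>N x y. goodfam a b N x y \<and> (\<Sum>i<N. y i - x i) < \<delta>
        \<longrightarrow> (\<Sum>i<N. \<bar>f (y i) - f (x i)\<bar>) < \<epsilon>" by (elim exE conjE)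
  then show ?thesis using that by blast
qed

lemma ac_intro:
  assumes "\<And>\<epsilon>. \<epsilon> > 0 \<Longrightarrow> \<exists>\<delta>>0. \<forall>N x y. goodfam a b N x y \<and> (\<Sum>i<N. y i - x i) < \<delta>
        \<longrightarrow> (\<Sum>i<N. \<bar>f (y i) - f (x i)\<bar>) < \<epsilon>"
  shows "abs_cont_on a b f"
  unfolding ac_alt using assms by blast

lemma ac_cong:
  assumes f: "abs_cont_on a b f" and eq: "\<And>t. t \<in> {a..b} \<Longrightarrow> f t = g t"
  shows "abs_cont_on a b g"
proof (rule ac_intro)
  fix \<epsilon> :: real assume e: "\<epsilon> > 0"
  obtain d where d: "d > 0" and H: "\<And>N x y. goodfam a b N x y \<Longrightarrow> (\<Sum>i<N. y i - x i) < d
        \<Longrightarrow> (\<Sum>i<N. \<bar>f (y i) - f (x i)\<bar>) < \<epsilon>"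
    using ac_get[OF f e] by blast
  show "\<exists>\<delta>>0. \<forall>N x y. goodfam a b N x y \<and> (\<Sum>i<N. y i - x i) < \<delta>
        \<longrightarrow> (\<Sum>i<N. \<bar>g (y i) - g (x i)\<bar>) < \<epsilon>"
  proof (intro exI[of _ d] conjI allI impI d)
    fix N x y assume A: "goodfam a b N x y \<and> (\<Sum>i<N. y i - x i) < d"
    have "(\<Sum>i<N. \<bar>g (y i) - g (x i)\<bar>) = (\<Sum>i<N. \<bar>f (y i) - f (x i)\<bar>)"
    proof (intro sum.cong refl)
      fix i assume "i \<in> {..<N}"
      then have "x i \<in> {a..b}" "y i \<in> {a..b}" using A unfolding goodfam_def by auto
      then show "\<bar>g (y i) - g (x i)\<bar> = \<bar>f (y i) - f (x i)\<bar>" using eq by simp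
    qed
    also have "\<dots> < \<epsilon>" using H A by blast
    finally show "(\<Sum>i<N. \<bar>g (y i) - g (x i)\<bar>) < \<epsilon>" .
  qed
qed

lemma ac_scale:
  assumes f: "abs_cont_on a b f"
  shows "abs_cont_on a b (\<lambda>t. k * f t)"
proof (rule ac_intro)
  fix \<epsilon> :: real assume e: "\<epsilon> > 0"
  then have e': "\<epsilon> / (\<bar>k\<bar> + 1) > 0" by auto
  obtain d where d: "d > 0" and H: "\<And>N x y. goodfam a b N x y \<Longrightarrow> (\<Sum>i<N. y i - x i) < d
        \<Longrightarrow> (\<Sum>i<N. \<bar>f (y i) - f (x i)\<bar>) < \<epsilon> / (\<bar>k\<bar> + 1)"
    using ac_get[OF f e'] by blast
  show "\<exists>\<delta>>0. \<forall>N x y. goodfam a b N x y \<and> (\<Sum>i<N. y i - x i) < \<delta>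
        \<longrightarrow> (\<Sum>i<N. \<bar>k * f (y i) - k * f (x i)\<bar>) < \<epsilon>"
  proof (intro exI[of _ d] conjI allI impI d)
    fix N x y assume A: "goodfam a b N x y \<and> (\<Sum>i<N. y i - x i) < d"
    define S where "S = (\<Sum>i<N. \<bar>f (y i) - f (x i)\<bar>)"
    have S0: "S \<ge> 0" unfolding S_def by (intro sum_nonneg) auto
    have SL: "S < \<epsilon> / (\<bar>k\<bar> + 1)" using H A unfolding S_def by blast
    have "(\<Sum>i<N. \<bar>k * f (y i) - k * f (x i)\<bar>) = \<bar>k\<bar> * S"
      unfolding S_def sum_distrib_left
      by (intro sum.cong) (auto simp: abs_mult[symmetric] right_diff_distrib)
    also have "\<dots> \<le> (\<bar>k\<bar> + 1) * S" using S0 by (simp add: mult_right_mono)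
    also have "\<dots> < \<epsilon>" using SL by (simp add: field_simps)
    finally show "(\<Sum>i<N. \<bar>k * f (y i) - k * f (x i)\<bar>) < \<epsilon>" .
  qed
qed
lemma ac_glue:
  assumes f1: "abs_cont_on a b f" and f2: "abs_cont_on b c f" and ab: "a \<le> b" and bc: "b \<le> c"
  shows "abs_cont_on a c f"
proof (rule ac_intro)
  fix \<epsilon> :: real assume e: "\<epsilon> > 0"
  obtain d1 where d1: "d1 > 0" and H1: "\<And>N x y. goodfam a b N x y \<Longrightarrow> (\<Sum>i<N. y i - x i) < d1
        \<Longrightarrow> (\<Sum>i<N. \<bar>f (y i) - f (x i)\<bar>) < \<epsilon>/2"
    using ac_get[OF f1 half_gt_zero[OF e]] by blast
  obtain d2 where d2: "d2 > 0" and H2: "\<And>N x y. goodfam b c N x y \<Longrightarrow> (\<Sum>i<N. y i - x i) < d2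
        \<Longrightarrow> (\<Sum>i<N. \<bar>f (y i) - f (x i)\<bar>) < \<epsilon>/2"
    using ac_get[OF f2 half_gt_zero[OF e]] by blast
  show "\<exists>\<delta>>0. \<forall>N x y. goodfam a c N x y \<and> (\<Sum>i<N. y i - x i) < \<delta>
        \<longrightarrow> (\<Sum>i<N. \<bar>f (y i) - f (x i)\<bar>) < \<epsilon>"
  proof (intro exI[of _ "min d1 d2"] conjI allI impI)
    show "min d1 d2 > 0" using d1 d2 by auto
    fix N x y assume A: "goodfam a c N x y \<and> (\<Sum>i<N. y i - x i) < min d1 d2"
    define x1 where "x1 i = min (x i) b" for i
    define y1 where "y1 i = min (y i) b" for i
    define x2 where "x2 i = max (x i) b" for i
    define y2 where "y2 i = max (y i) b" for i
    have g: "goodfam a c N x y" using A by blast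
    have g1: "goodfam a b N x1 y1" unfolding goodfam_def
    proof (rule conjI)
      show "\<forall>i<N. a \<le> x1 i \<and> x1 i \<le> y1 i \<and> y1 i \<le> b"
        using g ab unfolding goodfam_def x1_def y1_def by auto
    next
      show "\<forall>i<N. \<forall>j<N. i \<noteq> j \<longrightarrow> y1 i \<le> x1 j \<or> y1 j \<le> x1 i"
      proof (intro allI impI)
      fix i j assume "i < N" "j < N" "i \<noteq> j"
      then have "y i \<le> x j \<or> y j \<le> x i" using g unfolding goodfam_def by blast
      then show "y1 i \<le> x1 j \<or> y1 j \<le> x1 i" unfolding x1_def y1_def
        using min.mono[OF _ order_refl] by blast
      qed
    qed
    have g2: "goodfam b c N x2 y2" unfolding goodfam_def
    proof (rule conjI)
      show "\<forall>i<N. b \<le> x2 i \<and> x2 i \<le> y2 i \<and> y2 i \<le> c"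
        using g bc unfolding goodfam_def x2_def y2_def by auto
    next
      show "\<forall>i<N. \<forall>j<N. i \<noteq> j \<longrightarrow> y2 i \<le> x2 j \<or> y2 j \<le> x2 i"
      proof (intro allI impI)
      fix i j assume "i < N" "j < N" "i \<noteq> j"
      then have "y i \<le> x j \<or> y j \<le> x i" using g unfolding goodfam_def by blast
      then show "y2 i \<le> x2 j \<or> y2 j \<le> x2 i" unfolding x2_def y2_def
        using max.mono[OF _ order_refl] by blast
      qed
    qed
    have l1: "(\<Sum>i<N. y1 i - x1 i) \<le> (\<Sum>i<N. y i - x i)"
      using g unfolding goodfam_def x1_def y1_def by (intro sum_mono) auto
    have l2: "(\<Sum>i<N. y2 i - x2 i) \<le> (\<Sum>i<N. y i - x i)"
      using g unfolding goodfam_def x2_def y2_def by (intro sum_mono) auto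
    have "(\<Sum>i<N. \<bar>f (y i) - f (x i)\<bar>) \<le> (\<Sum>i<N. \<bar>f (y1 i) - f (x1 i)\<bar> + \<bar>f (y2 i) - f (x2 i)\<bar>)"
    proof (intro sum_mono)
      fix i assume "i \<in> {..<N}"
      then have "x i \<le> y i" using g unfolding goodfam_def by auto
      then have "f (y i) - f (x i) = (f (y1 i) - f (x1 i)) + (f (y2 i) - f (x2 i))"
        unfolding x1_def y1_def x2_def y2_def
        by (cases "y i \<le> b"; cases "x i \<le> b") (auto simp: min_def max_def)
      then show "\<bar>f (y i) - f (x i)\<bar> \<le> \<bar>f (y1 i) - f (x1 i)\<bar> + \<bar>f (y2 i) - f (x2 i)\<bar>"
        by linarith
    qed
    also have "\<dots> = (\<Sum>i<N. \<bar>f (y1 i) - f (x1 i)\<bar>) + (\<Sum>i<N. \<bar>f (y2 i) - f (x2 i)\<bar>)"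
      by (rule sum.distrib)
    also have "\<dots> < \<epsilon>/2 + \<epsilon>/2"
    proof -
      have "(\<Sum>i<N. y1 i - x1 i) < d1" "(\<Sum>i<N. y2 i - x2 i) < d2" using l1 l2 A by auto
      then show ?thesis using H1[OF g1] H2[OF g2] by linarith
    qed
    finally show "(\<Sum>i<N. \<bar>f (y i) - f (x i)\<bar>) < \<epsilon>" by simp
  qed
qed

lemma ac_reflect:
  assumes f: "abs_cont_on a b f"
  shows "abs_cont_on (c - b) (c - a) (\<lambda>t. f (c - t))"
proof (rule ac_intro)
  fix \<epsilon> :: real assume e: "\<epsilon> > 0"
  obtain d where d: "d > 0" and H: "\<And>N x y. goodfam a b N x y \<Longrightarrow> (\<Sum>i<N. y i - x i) < d
        \<Longrightarrow> (\<Sum>i<N. \<bar>f (y i) - f (x i)\<bar>) < \<epsilon>"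
    using ac_get[OF f e] by blast
  show "\<exists>\<delta>>0. \<forall>N x y. goodfam (c - b) (c - a) N x y \<and> (\<Sum>i<N. y i - x i) < \<delta>
        \<longrightarrow> (\<Sum>i<N. \<bar>f (c - y i) - f (c - x i)\<bar>) < \<epsilon>"
  proof (intro exI[of _ d] conjI allI impI d)
    fix N x y assume A: "goodfam (c - b) (c - a) N x y \<and> (\<Sum>i<N. y i - x i) < d"
    define x1 where "x1 i = c - y i" for i
    define y1 where "y1 i = c - x i" for i
    have g: "goodfam (c - b) (c - a) N x y" using A by blast
    have g1: "goodfam a b N x1 y1" unfolding goodfam_def
    proof (rule conjI)
      show "\<forall>i<N. a \<le> x1 i \<and> x1 i \<le> y1 i \<and> y1 i \<le> b"
        using g unfolding goodfam_def x1_def y1_def by auto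
    next
      show "\<forall>i<N. \<forall>j<N. i \<noteq> j \<longrightarrow> y1 i \<le> x1 j \<or> y1 j \<le> x1 i"
      proof (intro allI impI)
        fix i j assume "i < N" "j < N" "i \<noteq> j"
        then have "y i \<le> x j \<or> y j \<le> x i" using g unfolding goodfam_def by blast
        then show "y1 i \<le> x1 j \<or> y1 j \<le> x1 i" unfolding x1_def y1_def by linarith
      qed
    qed
    have "(\<Sum>i<N. y1 i - x1 i) = (\<Sum>i<N. y i - x i)" unfolding x1_def y1_def by simp
    then have "(\<Sum>i<N. \<bar>f (y1 i) - f (x1 i)\<bar>) < \<epsilon>" using H[OF g1] A by simp
    moreover have "(\<Sum>i<N. \<bar>f (y1 i) - f (x1 i)\<bar>) = (\<Sum>i<N. \<bar>f (c - y i) - f (c - x i)\<bar>)"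
      unfolding x1_def y1_def by (intro sum.cong) auto
    ultimately show "(\<Sum>i<N. \<bar>f (c - y i) - f (c - x i)\<bar>) < \<epsilon>" by simp
  qed
qed

lemma ac_diff:
  assumes f1: "abs_cont_on a b f" and f2: "abs_cont_on a b g"
  shows "abs_cont_on a b (\<lambda>t. f t - g t)"
proof (rule ac_intro)
  fix \<epsilon> :: real assume e: "\<epsilon> > 0"
  obtain d1 where d1: "d1 > 0" and H1: "\<And>N x y. goodfam a b N x y \<Longrightarrow> (\<Sum>i<N. y i - x i) < d1
        \<Longrightarrow> (\<Sum>i<N. \<bar>f (y i) - f (x i)\<bar>) < \<epsilon>/2"
    using ac_get[OF f1 half_gt_zero[OF e]] by blast
  obtain d2 where d2: "d2 > 0" and H2: "\<And>N x y. goodfam a b N x y \<Longrightarrow> (\<Sum>i<N. y i - x i) < d2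
        \<Longrightarrow> (\<Sum>i<N. \<bar>g (y i) - g (x i)\<bar>) < \<epsilon>/2"
    using ac_get[OF f2 half_gt_zero[OF e]] by blast
  show "\<exists>\<delta>>0. \<forall>N x y. goodfam a b N x y \<and> (\<Sum>i<N. y i - x i) < \<delta>
        \<longrightarrow> (\<Sum>i<N. \<bar>(f (y i) - g (y i)) - (f (x i) - g (x i))\<bar>) < \<epsilon>"
  proof (intro exI[of _ "min d1 d2"] conjI allI impI)
    show "min d1 d2 > 0" using d1 d2 by auto
    fix N x y assume A: "goodfam a b N x y \<and> (\<Sum>i<N. y i - x i) < min d1 d2"
    have "(\<Sum>i<N. \<bar>(f (y i) - g (y i)) - (f (x i) - g (x i))\<bar>) \<le> (\<Sum>i<N. \<bar>f (y i) - f (x i)\<bar> + \<bar>g (y i) - g (x i)\<bar>)"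
      by (intro sum_mono) linarith
    also have "\<dots> = (\<Sum>i<N. \<bar>f (y i) - f (x i)\<bar>) + (\<Sum>i<N. \<bar>g (y i) - g (x i)\<bar>)"
      by (rule sum.distrib)
    also have "\<dots> < \<epsilon>/2 + \<epsilon>/2"
    proof -
      have "goodfam a b N x y" "(\<Sum>i<N. y i - x i) < d1" "(\<Sum>i<N. y i - x i) < d2" using A by auto
      then show ?thesis using H1[of N x y] H2[of N x y] by linarith
    qed
    finally show "(\<Sum>i<N. \<bar>(f (y i) - g (y i)) - (f (x i) - g (x i))\<bar>) < \<epsilon>" by simp
  qed
qed

lemma deriv_outside:
  assumes "closed S" "t \<notin> S"
  shows "(f has_field_derivative d) (at t within S)"
  unfolding has_field_derivative_iff
  by (rule Lim_trivial_limit, rule not_in_closure_trivial_limitI) (use assms in \<open>simp add: closure_closed\<close>)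

lemma deriv_Un:
  assumes "(f has_field_derivative d) (at t within S)" "(f has_field_derivative d) (at t within T)"
  shows "(f has_field_derivative d) (at t within S \<union> T)"
  using assms unfolding has_field_derivative_iff Lim_within_Un by blast

lemma deriv_glue:
  fixes L t :: real
  assumes L: "L > 0"
    and l: "t \<le> L \<Longrightarrow> (f has_field_derivative d) (at t within {0..L})"
    and r: "L \<le> t \<Longrightarrow> (f has_field_derivative d) (at t within {L..2*L})"
  shows "(f has_field_derivative d) (at t within {0..2*L})"
proof -
  have e: "{0..2*L} = {0..L} \<union> {L..2*L}" using L by auto
  have 1: "(f has_field_derivative d) (at t within {0..L})"
    using l deriv_outside[of "{0..L}" t f d] by (cases "t \<le> L") auto
  have 2: "(f has_field_derivative d) (at t within {L..2*L})"
    using r deriv_outside[of "{L..2*L}" t f d] by (cases "L \<le> t") auto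
  show ?thesis unfolding e by (rule deriv_Un[OF 1 2])
qed

section \<open>Reflection\<close>

definition reflD :: "real \<Rightarrow> nat \<Rightarrow> (nat \<Rightarrow> real \<Rightarrow> real) \<Rightarrow> nat \<Rightarrow> real \<Rightarrow> real" where
  "reflD L p D k t = (if t \<le> L then D k t else (-1) ^ (k + p) * D k (2 * L - t))"

definition reflS :: "real \<Rightarrow> nat \<Rightarrow> (real \<Rightarrow> real) \<Rightarrow> real \<Rightarrow> real" where
  "reflS L p \<sigma> t = (if t \<le> L then \<sigma> t else (-1) ^ p * \<sigma> (2 * L - t))"

lemma reflD_right:
  assumes cond: "\<And>k. k < m \<Longrightarrow> odd (k + p) \<Longrightarrow> D k L = 0" and k: "k < m" and t: "L \<le> t"
  shows "reflD L p D k t = (-1) ^ (k + p) * D k (2 * L - t)"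
proof (cases "t \<le> L")
  case True
  then have "t = L" using t by auto
  then show ?thesis using cond[OF k] unfolding reflD_def by (cases "even (k + p)") auto
qed (simp add: reflD_def)

lemma deriv_reflD_left:
  assumes "(D k has_field_derivative d) (at t within {0..L})" "t \<in> {0..L}"
  shows "(reflD L p D k has_field_derivative d) (at t within {0..L})"
  by (rule has_field_derivative_transform_within[OF assms(1) zero_less_one assms(2)])
     (simp add: reflD_def)

lemma deriv_reflD_right:
  assumes cond: "\<And>k. k < m \<Longrightarrow> odd (k + p) \<Longrightarrow> D k L = 0" and k: "k < m"
    and dr: "(D k has_field_derivative d) (at (2*L - t) within {0..L})" and t: "t \<in> {L..2*L}"
  shows "(reflD L p D k has_field_derivative (-1) ^ (k + p) * (d * -1)) (at t within {L..2*L})"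
proof -
  have im: "(\<lambda>x. 2*L - x) ` {L..2*L} \<subseteq> {0..L}" by auto
  have g: "((\<lambda>x. 2*L - x) has_field_derivative -1) (at t within {L..2*L})"
    by (auto intro!: derivative_eq_intros)
  have "(D k \<circ> (\<lambda>x. 2*L - x) has_field_derivative d * -1) (at t within {L..2*L})"
    by (rule DERIV_image_chain[OF has_field_derivative_subset[OF dr im] g])
  then have "((\<lambda>x. (-1) ^ (k + p) * D k (2*L - x)) has_field_derivative (-1) ^ (k + p) * (d * -1)) (at t within {L..2*L})"
    using DERIV_cmult[of "D k \<circ> (\<lambda>x. 2*L - x)" "d * -1" t "{L..2*L}" "(-1) ^ (k + p)"] by (simp add: o_def)
  then show ?thesis
    by (rule has_field_derivative_transform_within[OF _ zero_less_one t])
       (use reflD_right[of m p D, OF cond k] in auto)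
qed

lemma W_refl:
  fixes L :: real
  assumes L: "L > 0" and m: "m \<ge> 1"
    and W: "W_space m 0 L u D"
    and cond: "\<And>k. k < m \<Longrightarrow> odd (k + p) \<Longrightarrow> D k L = 0"
  shows "W_space m 0 (2*L) (reflD L p D 0) (reflD L p D)"
proof -
  have cont: "continuous_on {0..L} (D k)" if "k < m" for k using W that unfolding W_space_def by blast
  have der: "\<And>t. t \<in> {0..L} \<Longrightarrow> (D k has_real_derivative D (Suc k) t) (at t within {0..L})"
    if "Suc k < m" for k using W that unfolding W_space_def by blast
  have ac: "abs_cont_on 0 L (D (m - 1))" using W unfolding W_space_def by blast
  have e: "{0..2*L} = {0..L} \<union> {L..2*L}" using L by auto
  have im: "(\<lambda>x. 2*L - x) ` {L..2*L} \<subseteq> {0..L}" by auto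
  have C: "continuous_on {0..2*L} (reflD L p D k)" if k: "k < m" for k
  proof -
    have 1: "continuous_on {0..L} (reflD L p D k)"
      using cont[OF k] by (rule continuous_on_eq) (simp add: reflD_def)
    have "continuous_on {L..2*L} (\<lambda>t. D k (2*L - t))"
      by (rule continuous_on_compose2[OF cont[OF k] _ im]) (intro continuous_intros)
    then have "continuous_on {L..2*L} (\<lambda>t. (-1) ^ (k + p) * D k (2*L - t))"
      by (rule continuous_on_mult_left)
    then have 2: "continuous_on {L..2*L} (reflD L p D k)"
      by (rule continuous_on_eq) (use reflD_right[of m p D, OF cond k] in auto)
    show ?thesis unfolding e by (rule continuous_on_closed_Un[OF _ _ 1 2]) auto
  qed
  have Dv: "(reflD L p D k has_real_derivative reflD L p D (Suc k) t) (at t within {0..2*L})"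
    if k: "Suc k < m" and t: "t \<in> {0..2*L}" for k t
  proof (rule deriv_glue[OF L])
    assume "t \<le> L"
    then have tt: "t \<in> {0..L}" using t by auto
    have "reflD L p D (Suc k) t = D (Suc k) t" using tt by (simp add: reflD_def)
    then show "(reflD L p D k has_real_derivative reflD L p D (Suc k) t) (at t within {0..L})"
      using deriv_reflD_left[where D=D and k=k and L=L and p=p, OF der[OF k tt] tt] by simp
  next
    assume "L \<le> t"
    then have tt: "t \<in> {L..2*L}" using t by auto
    have "2*L - t \<in> {0..L}" using tt by auto
    from deriv_reflD_right[of m p D, OF cond _ der[OF k this] tt] k
    have "(reflD L p D k has_real_derivative (-1) ^ (k + p) * (D (Suc k) (2 * L - t) * -1)) (at t within {L..2*L})"
      by simp
    moreover have "(-1) ^ (k + p) * (D (Suc k) (2 * L - t) * -1) = reflD L p D (Suc k) t"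
      using reflD_right[of m p D, OF cond, of "Suc k" t] k tt by simp
    ultimately show "(reflD L p D k has_real_derivative reflD L p D (Suc k) t) (at t within {L..2*L})"
      by simp
  qed
  have AC: "abs_cont_on 0 (2*L) (reflD L p D (m - 1))"
  proof (rule ac_glue[of 0 L _ "2*L"])
    show "abs_cont_on 0 L (reflD L p D (m - 1))"
      by (rule ac_cong[OF ac]) (simp add: reflD_def)
    have "abs_cont_on (2*L - L) (2*L - 0) (\<lambda>t. D (m - 1) (2*L - t))" by (rule ac_reflect[OF ac])
    then have "abs_cont_on L (2*L) (\<lambda>t. (-1) ^ (m - 1 + p) * D (m - 1) (2*L - t))"
      by (intro ac_scale) simp
    then show "abs_cont_on L (2*L) (reflD L p D (m - 1))"
      by (rule ac_cong) (use reflD_right[of m p D, OF cond, of "m - 1"] m in auto)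
  qed (use L in auto)
  show ?thesis unfolding W_space_def
  proof (intro conjI)
    show "\<forall>t\<in>{0..2*L}. reflD L p D 0 t = reflD L p D 0 t" by blast
    show "\<forall>k<m. continuous_on {0..2*L} (reflD L p D k)" using C by blast
    show "\<forall>k. Suc k < m \<longrightarrow> (\<forall>t\<in>{0..2*L}. (reflD L p D k has_real_derivative reflD L p D (Suc k) t) (at t within {0..2*L}))"
      using Dv by blast
    show "abs_cont_on 0 (2*L) (reflD L p D (m - 1))" by (rule AC)
  qed
qed

lemma AE_reflect:
  fixes c :: real
  assumes "AE x in lborel. P x"
  shows "AE x in lborel. P (c - x)"
proof -
  from assms obtain N where N: "{x \<in> space lborel. \<not> P x} \<subseteq> N" "emeasure lborel N = 0" "N \<in> sets lborel"
    by (rule AE_E)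
  have NN: "N \<in> null_sets lborel" using N by auto
  have "AE x in lborel. x \<notin> N" by (rule AE_not_in[OF NN])
  moreover have "Measurable.pred borel (\<lambda>x::real. x \<notin> N)" using N(3) by simp
  ultimately have "AE x in lborel. c + (-1) * x \<notin> N"
    by (intro AE_borel_affine) auto
  then show ?thesis by (rule eventually_mono) (use N(1) in auto)
qed

lemma solves_refl:
  fixes L :: real
  assumes L: "L > 0" and m: "m \<ge> 1" and me: "even m"
    and S: "solves_ae c m 0 L D \<sigma>"
  shows "solves_ae (refl_coeff L c) m 0 (2*L) (reflD L p D) (reflS L p \<sigma>)"
proof -
  define Q where "Q t \<longleftrightarrow> (\<exists>d. (D (m - 1) has_real_derivative d) (at t within {0..L}) \<and>
             d + (\<Sum>k<m. c k t * D k t) = \<sigma> t)" for t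
  have A1: "AE t in lborel. t \<in> {0..L} \<longrightarrow> Q t" using S unfolding solves_ae_def Q_def by simp
  have A2: "AE t in lborel. (2*L - t) \<in> {0..L} \<longrightarrow> Q (2*L - t)" by (rule AE_reflect[OF A1])
  have A3: "AE t in lborel. t \<noteq> L" by (rule AE_lborel_singleton)
  have "AE t in lborel. t \<in> {0..2*L} \<longrightarrow>
        (\<exists>d. (reflD L p D (m - 1) has_real_derivative d) (at t within {0..2*L}) \<and>
             d + (\<Sum>k<m. refl_coeff L c k t * reflD L p D k t) = reflS L p \<sigma> t)"
    using A1 A2 A3
  proof eventually_elim
    case (elim t)
    show ?case
    proof
      assume t: "t \<in> {0..2*L}"
      show "\<exists>d. (reflD L p D (m - 1) has_real_derivative d) (at t within {0..2*L}) \<and>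
             d + (\<Sum>k<m. refl_coeff L c k t * reflD L p D k t) = reflS L p \<sigma> t"
      proof (cases "t < L")
        case True
        then have tt: "t \<in> {0..L}" using t by auto
        then obtain d where d: "(D (m - 1) has_real_derivative d) (at t within {0..L})"
          and eq: "d + (\<Sum>k<m. c k t * D k t) = \<sigma> t" using elim(1) unfolding Q_def by blast
        have "(reflD L p D (m - 1) has_real_derivative d) (at t within {0..2*L})"
          by (rule deriv_glue[OF L]) (use True deriv_reflD_left[where D=D and L=L and p=p, OF d tt] in auto)
        moreover have "d + (\<Sum>k<m. refl_coeff L c k t * reflD L p D k t) = reflS L p \<sigma> t"
          using eq True by (simp add: refl_coeff_def reflD_def reflS_def)
        ultimately show ?thesis by blast
      next
        case False
        then have tl: "t > L" using elim(3) by auto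
        then have tt: "t \<in> {L..2*L}" using t by auto
        have ss: "2*L - t \<in> {0..L}" using tt by auto
        then obtain d where d: "(D (m - 1) has_real_derivative d) (at (2*L - t) within {0..L})"
          and eq: "d + (\<Sum>k<m. c k (2*L - t) * D k (2*L - t)) = \<sigma> (2*L - t)"
          using elim(2) unfolding Q_def by blast
        define cond where "cond k \<longleftrightarrow> (k < m \<longrightarrow> odd (k + p) \<longrightarrow> D k L = 0)" for k
        have dd: "((\<lambda>x. (-1) ^ (m - 1 + p) * D (m - 1) (2*L - x)) has_real_derivative (-1) ^ (m - 1 + p) * (d * -1)) (at t within {L..2*L})"
        proof -
          have im: "(\<lambda>x. 2*L - x) ` {L..2*L} \<subseteq> {0..L}" by auto
          have g: "((\<lambda>x. 2*L - x) has_field_derivative -1) (at t within {L..2*L})"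
            by (auto intro!: derivative_eq_intros)
          have "(D (m - 1) \<circ> (\<lambda>x. 2*L - x) has_field_derivative d * -1) (at t within {L..2*L})"
            by (rule DERIV_image_chain[OF has_field_derivative_subset[OF d im] g])
          then show ?thesis
            using DERIV_cmult[of "D (m - 1) \<circ> (\<lambda>x. 2*L - x)" "d * -1" t "{L..2*L}" "(-1) ^ (m - 1 + p)"]
            by (simp add: o_def)
        qed
        have dd2: "(reflD L p D (m - 1) has_real_derivative (-1) ^ (m - 1 + p) * (d * -1)) (at t within {L..2*L})"
          by (rule has_field_derivative_transform_within[OF dd _ tt, of "t - L"])
             (use tl in \<open>auto simp: reflD_def dist_real_def\<close>)
        have "(reflD L p D (m - 1) has_real_derivative (-1) ^ (m - 1 + p) * (d * -1)) (at t within {0..2*L})"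
          by (rule deriv_glue[OF L]) (use tl dd2 in auto)
        moreover
        have pw: "(-1::real) ^ (m - 1 + p) * (d * -1) = (-1) ^ p * d"
        proof -
          have "(-1::real) ^ (m - 1) = -1" using m me by (simp add: neg_one_odd_power)
          then show ?thesis by (simp add: power_add)
        qed
        have sm: "(\<Sum>k<m. refl_coeff L c k t * reflD L p D k t) = (-1) ^ p * (\<Sum>k<m. c k (2*L - t) * D k (2*L - t))"
          unfolding sum_distrib_left
        proof (intro sum.cong refl)
          fix k
          have "(-1::real) ^ k * (-1) ^ k = 1" by (simp add: power_mult_distrib[symmetric])
          then show "refl_coeff L c k t * reflD L p D k t = (-1) ^ p * (c k (2*L - t) * D k (2*L - t))"
            using tl unfolding refl_coeff_def reflD_def power_add
            by (simp add: algebra_simps)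
        qed
        have "(-1) ^ (m - 1 + p) * (d * -1) + (\<Sum>k<m. refl_coeff L c k t * reflD L p D k t) = reflS L p \<sigma> t"
        proof -
          have "(-1) ^ p * d + (-1) ^ p * (\<Sum>k<m. c k (2*L - t) * D k (2*L - t)) = (-1) ^ p * \<sigma> (2*L - t)"
            using eq by (metis distrib_left)
          then show ?thesis unfolding pw sm using tl by (simp add: reflS_def)
        qed
        ultimately show ?thesis by blast
      qed
    qed
  qed
  then show ?thesis unfolding solves_ae_def .
qed

lemma absint_reflS:
  fixes L :: real
  assumes L: "L > 0" and f: "\<sigma> absolutely_integrable_on {0..L}"
  shows "reflS L p \<sigma> absolutely_integrable_on {0..2*L}"
proof -
  have 1: "reflS L p \<sigma> absolutely_integrable_on {0..L}"
    by (rule absolutely_integrable_spike[OF f negligible_empty]) (simp add: reflS_def)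
  have im: "(\<lambda>x::real. (1 / -1) *\<^sub>R x + - ((1 / -1) *\<^sub>R (2*L))) ` cbox 0 L = {L..2*L}"
  proof
    show "(\<lambda>x::real. (1 / -1) *\<^sub>R x + - ((1 / -1) *\<^sub>R (2*L))) ` cbox 0 L \<subseteq> {L..2*L}" by auto
    show "{L..2*L} \<subseteq> (\<lambda>x::real. (1 / -1) *\<^sub>R x + - ((1 / -1) *\<^sub>R (2*L))) ` cbox 0 L"
    proof
      fix y assume "y \<in> {L..2*L}"
      then show "y \<in> (\<lambda>x::real. (1 / -1) *\<^sub>R x + - ((1 / -1) *\<^sub>R (2*L))) ` cbox 0 L"
        by (intro rev_image_eqI[of "2*L - y"]) auto
    qed
  qed
  have i1: "\<sigma> integrable_on cbox 0 L" and i2: "(\<lambda>x. norm (\<sigma> x)) integrable_on cbox 0 L"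
    using f unfolding absolutely_integrable_on_def by auto
  have j1: "(\<lambda>x. \<sigma> ((-1) *\<^sub>R x + 2*L)) integrable_on {L..2*L}"
    using integrable_affinity[OF i1, of "-1" "2*L"] im by simp
  have j2: "(\<lambda>x. norm (\<sigma> ((-1) *\<^sub>R x + 2*L))) integrable_on {L..2*L}"
    using integrable_affinity[OF i2, of "-1" "2*L"] im by simp
  have "(\<lambda>x. \<sigma> (2*L - x)) absolutely_integrable_on {L..2*L}"
    unfolding absolutely_integrable_on_def using j1 j2 by simp
  then have "(\<lambda>x. (-1) ^ p *\<^sub>R \<sigma> (2*L - x)) absolutely_integrable_on {L..2*L}"
    by (rule absolutely_integrable_scaleR_left)
  then have 2: "reflS L p \<sigma> absolutely_integrable_on {L..2*L}"
    by (rule absolutely_integrable_spike[OF _ negligible_sing[of L]]) (auto simp: reflS_def)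
  have e: "{0..2*L} = {0..L} \<union> {L..2*L}" using L by auto
  show ?thesis unfolding e by (rule absolutely_integrable_Un[OF 1 2])
qed

lemma nonres_apply:
  assumes nr: "nonresonant c m lo hi (bc_P n lo hi)"
    and W1: "W_space m lo hi u1 D1" and W2: "W_space m lo hi u2 D2"
    and B1: "bc_P n lo hi D1" and B2: "bc_P n lo hi D2"
    and S1: "solves_ae c m lo hi D1 \<sigma>" and S2: "solves_ae c m lo hi D2 \<sigma>"
  shows "\<forall>t\<in>{lo..hi}. u1 t = u2 t"
proof -
  define D where "D k t = D1 k t - D2 k t" for k t
  define u where "u t = u1 t - u2 t" for t
  have W: "W_space m lo hi u D" unfolding W_space_def
  proof (intro conjI)
    show "\<forall>t\<in>{lo..hi}. D 0 t = u t" using W1 W2 unfolding W_space_def D_def u_def by simp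
    show "\<forall>k<m. continuous_on {lo..hi} (D k)" using W1 W2 unfolding W_space_def D_def
      by (auto intro: continuous_on_diff)
    show "\<forall>k. Suc k < m \<longrightarrow> (\<forall>t\<in>{lo..hi}. (D k has_real_derivative D (Suc k) t) (at t within {lo..hi}))"
      using W1 W2 unfolding W_space_def D_def by (auto intro!: DERIV_diff)
    have "abs_cont_on lo hi (\<lambda>t. D1 (m - 1) t - D2 (m - 1) t)"
      using W1 W2 unfolding W_space_def by (intro ac_diff) auto
    then show "abs_cont_on lo hi (D (m - 1))" unfolding D_def by simp
  qed
  have B: "bc_P n lo hi D" using B1 B2 unfolding bc_P_def D_def by simp
  have "AE t in lborel. t \<in> {lo..hi} \<longrightarrow>
        (\<exists>d. (D (m - 1) has_real_derivative d) (at t within {lo..hi}) \<and>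
             d + (\<Sum>k<m. c k t * D k t) = 0)"
    using S1[unfolded solves_ae_def] S2[unfolded solves_ae_def]
  proof eventually_elim
    case (elim t)
    show ?case
    proof
      assume t: "t \<in> {lo..hi}"
      obtain d1 where d1: "(D1 (m - 1) has_real_derivative d1) (at t within {lo..hi})"
        "d1 + (\<Sum>k<m. c k t * D1 k t) = \<sigma> t" using elim(1) t by blast
      obtain d2 where d2: "(D2 (m - 1) has_real_derivative d2) (at t within {lo..hi})"
        "d2 + (\<Sum>k<m. c k t * D2 k t) = \<sigma> t" using elim(2) t by blast
      have "(D (m - 1) has_real_derivative d1 - d2) (at t within {lo..hi})"
        unfolding D_def[abs_def] using DERIV_diff[OF d1(1) d2(1)] by simp
      moreover have "(\<Sum>k<m. c k t * D k t) = (\<Sum>k<m. c k t * D1 k t) - (\<Sum>k<m. c k t * D2 k t)"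
        unfolding D_def right_diff_distrib sum_subtractf ..
      then have "d1 - d2 + (\<Sum>k<m. c k t * D k t) = 0" using d1(2) d2(2) by simp
      ultimately show "\<exists>d. (D (m - 1) has_real_derivative d) (at t within {lo..hi}) \<and>
             d + (\<Sum>k<m. c k t * D k t) = 0" by blast
    qed
  qed
  then have S: "solves_ae c m lo hi D (\<lambda>_. 0)" unfolding solves_ae_def by simp
  have "\<forall>t\<in>{lo..hi}. u t = 0" using nr W B S unfolding nonresonant_def by blast
  then show ?thesis unfolding u_def by simp
qed

lemma case_lemma:
  fixes T :: real and n :: nat
  assumes T: "T > 0" and n: "n \<ge> 1"
    and gB: "is_green a (2*n) 0 T B G"
    and gP: "is_green (refl_coeff (2*T) (refl_coeff T a)) (2*n) 0 (4*T) (bc_P n 0 (4*T)) GP"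
    and nrP4: "nonresonant (refl_coeff (2*T) (refl_coeff T a)) (2*n) 0 (4*T) (bc_P n 0 (4*T))"
    and condT: "\<And>D k. B D \<Longrightarrow> k < 2*n \<Longrightarrow> odd (k + p1) \<Longrightarrow> D k T = 0"
    and cond0: "\<And>D k. B D \<Longrightarrow> k < 2*n \<Longrightarrow> odd (k + p2) \<Longrightarrow> D k 0 = 0"
    and sig: "\<sigma> absolutely_integrable_on {0..T}"
    and t: "t \<in> {0..T}"
  shows "integral {0..T} (\<lambda>s. G t s * \<sigma> s) =
         integral {0..4*T} (\<lambda>s. GP t s * reflS (2*T) p2 (reflS T p1 \<sigma>) s)"
proof -
  define m where "m = 2*n"
  have m1: "m \<ge> 1" and me: "even m" using n unfolding m_def by auto
  obtain D where W: "W_space m 0 T (\<lambda>t. integral {0..T} (\<lambda>s. G t s * \<sigma> s)) D"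
    and BD: "B D" and S: "solves_ae a m 0 T D \<sigma>"
    using gB sig unfolding is_green_def m_def by blast
  define E where "E = reflD T p1 D"
  have WE: "W_space m 0 (2*T) (E 0) E" unfolding E_def
    by (rule W_refl[OF T m1 W]) (use condT[OF BD] m_def in auto)
  have SE: "solves_ae (refl_coeff T a) m 0 (2*T) E (reflS T p1 \<sigma>)" unfolding E_def
    by (rule solves_refl[OF T m1 me S])
  have T2: "2*T > 0" using T by simp
  have condE: "E k (2*T) = 0" if "k < m" "odd (k + p2)" for k
    using cond0[OF BD, of k] that T unfolding E_def reflD_def m_def by simp
  define F where "F = reflD (2*T) p2 E"
  have 4: "2*(2*T) = 4*T" by simp
  have WF: "W_space m 0 (4*T) (F 0) F" unfolding F_def
    using W_refl[OF T2 m1 WE, of p2] condE unfolding 4 by blast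
  have SF: "solves_ae (refl_coeff (2*T) (refl_coeff T a)) m 0 (4*T) F (reflS (2*T) p2 (reflS T p1 \<sigma>))"
    unfolding F_def using solves_refl[OF T2 m1 me SE, of p2] unfolding 4 .
  have BF: "bc_P n 0 (4*T) F" unfolding bc_P_def
  proof (intro allI impI)
    fix k assume k: "k < 2*n"
    have F0: "F k 0 = D k 0" using T unfolding F_def E_def reflD_def by simp
    have F4: "F k (4*T) = (-1) ^ (k + p2) * D k 0"
      using T unfolding F_def E_def reflD_def by simp
    show "F k 0 = F k (4*T)"
    proof (cases "odd (k + p2)")
      case True
      then show ?thesis using cond0[OF BD k True] F0 F4 by simp
    next
      case False
      then show ?thesis using F0 F4 by simp
    qed
  qed
  have sig4: "reflS (2*T) p2 (reflS T p1 \<sigma>) absolutely_integrable_on {0..4*T}"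
    using absint_reflS[OF T2 absint_reflS[OF T sig], of p2 p1] unfolding 4 .
  obtain DP where WP: "W_space m 0 (4*T) (\<lambda>t. integral {0..4*T} (\<lambda>s. GP t s * reflS (2*T) p2 (reflS T p1 \<sigma>) s)) DP"
    and BP: "bc_P n 0 (4*T) DP" and SP: "solves_ae (refl_coeff (2*T) (refl_coeff T a)) m 0 (4*T) DP (reflS (2*T) p2 (reflS T p1 \<sigma>))"
    using gP sig4 unfolding is_green_def m_def by blast
  have eq: "\<forall>x\<in>{0..4*T}. F 0 x = integral {0..4*T} (\<lambda>s. GP x s * reflS (2*T) p2 (reflS T p1 \<sigma>) s)"
    by (rule nonres_apply[OF nrP4[folded m_def] WF WP BF BP SF SP])
  have "F 0 t = D 0 t" using t T unfolding F_def E_def reflD_def by simp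
  also have "\<dots> = integral {0..T} (\<lambda>s. G t s * \<sigma> s)" using W t unfolding W_space_def by blast
  finally show ?thesis using eq t T by simp
qed

lemma odd_idx: "odd k \<Longrightarrow> k < 2*n \<Longrightarrow> \<exists>j<n. k = 2*j+1" for k n :: nat by presburger
lemma even_idx: "even k \<Longrightarrow> k < 2*n \<Longrightarrow> \<exists>j<n. k = 2*j" for k n :: nat by presburger

lemma slice_cont:
  assumes "continuous_on (A \<times> B) (\<lambda>(x, y). G x y)" "x \<in> A"
  shows "continuous_on B (\<lambda>y. G x y)"
proof -
  have "continuous_on B (\<lambda>y. (\<lambda>(x, y). G x y) (x, y))"
    by (rule continuous_on_compose2[OF assms(1)]) (use assms(2) in \<open>auto intro!: continuous_intros\<close>)
  then show ?thesis by simp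
qed

lemma prod_absint:
  fixes f g :: "real \<Rightarrow> real"
  assumes "continuous_on {a..b} f" "g absolutely_integrable_on {a..b}"
  shows "(\<lambda>x. f x * g x) integrable_on {a..b}"
proof -
  have "(\<lambda>x. f x * g x) absolutely_integrable_on {a..b}"
  proof (rule absolutely_integrable_bounded_measurable_product_real)
    show "f \<in> borel_measurable (lebesgue_on {a..b})"
      by (rule continuous_imp_measurable_on_sets_lebesgue[OF assms(1)]) simp
    show "bounded (f ` {a..b})"
      by (rule compact_imp_bounded, rule compact_continuous_image[OF assms(1)]) simp
  qed (use assms in auto)
  then show ?thesis unfolding absolutely_integrable_on_def by blast
qed

theorem mainTheorem5:
  fixes n :: nat and T \<alpha> :: real and a :: "nat \<Rightarrow> real \<Rightarrow> real"
    and GN GD GM1 GM2 GP :: "real \<Rightarrow> real \<Rightarrow> real"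
  assumes n: "n \<ge> 1" and T: "T > 0" and alpha: "\<alpha> \<ge> 1"
    and coeffs: "\<forall>k<2*n. in_Lp \<alpha> 0 T (a k)"
    and nrN: "nonresonant a (2*n) 0 T (bc_N n 0 T)"
    and nrD: "nonresonant a (2*n) 0 T (bc_D n 0 T)"
    and nrM1: "nonresonant a (2*n) 0 T (bc_M1 n 0 T)"
    and nrM2: "nonresonant a (2*n) 0 T (bc_M2 n 0 T)"
    and nrN2: "nonresonant (refl_coeff T a) (2*n) 0 (2*T) (bc_N n 0 (2*T))"
    and nrD2: "nonresonant (refl_coeff T a) (2*n) 0 (2*T) (bc_D n 0 (2*T))"
    and nrP4: "nonresonant (refl_coeff (2*T) (refl_coeff T a)) (2*n) 0 (4*T) (bc_P n 0 (4*T))"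
    and gN: "is_green a (2*n) 0 T (bc_N n 0 T) GN"
    and gD: "is_green a (2*n) 0 T (bc_D n 0 T) GD"
    and gM1: "is_green a (2*n) 0 T (bc_M1 n 0 T) GM1"
    and gM2: "is_green a (2*n) 0 T (bc_M2 n 0 T) GM2"
    and gP: "is_green (refl_coeff (2*T) (refl_coeff T a)) (2*n) 0 (4*T) (bc_P n 0 (4*T)) GP"
  shows "\<forall>t\<in>{0..T}. \<forall>s\<in>{0..T}.
           GP t s = (GN t s + GD t s + GM1 t s + GM2 t s) / 4"
proof (intro ballI)
  fix t s assume t: "t \<in> {0..T}" and s: "s \<in> {0..T}"
  define H where "H s = GP t s - (GN t s + GD t s + GM1 t s + GM2 t s) / 4" for s
  have t4: "t \<in> {0..4*T}" using t T by auto
  have cN: "continuous_on {0..T} (\<lambda>s. GN t s)" by (rule slice_cont[OF conjunct1[OF gN[unfolded is_green_def]] t])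
  have cD: "continuous_on {0..T} (\<lambda>s. GD t s)" by (rule slice_cont[OF conjunct1[OF gD[unfolded is_green_def]] t])
  have cM1: "continuous_on {0..T} (\<lambda>s. GM1 t s)" by (rule slice_cont[OF conjunct1[OF gM1[unfolded is_green_def]] t])
  have cM2: "continuous_on {0..T} (\<lambda>s. GM2 t s)" by (rule slice_cont[OF conjunct1[OF gM2[unfolded is_green_def]] t])
  have cP4: "continuous_on {0..4*T} (\<lambda>s. GP t s)" by (rule slice_cont[OF conjunct1[OF gP[unfolded is_green_def]] t4])
  have cP: "continuous_on {0..T} (\<lambda>s. GP t s)" by (rule continuous_on_subset[OF cP4]) (use T in auto)
  have cH: "continuous_on {0..T} H" unfolding H_def[abs_def]
    by (intro continuous_intros cN cD cM1 cM2 cP) auto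
  have aH: "H absolutely_integrable_on {0..T}" by (rule absolutely_integrable_continuous_real[OF cH])
  have T2: "2*T > 0" using T by simp
  have 4: "2*(2*T) = 4*T" by simp
  define sg where "sg p1 p2 = reflS (2*T) p2 (reflS T p1 H)" for p1 p2
  have asg: "sg p1 p2 absolutely_integrable_on {0..4*T}" for p1 p2
    using absint_reflS[OF T2 absint_reflS[OF T aH], of p2 p1] unfolding 4 sg_def .
  have iP: "(\<lambda>s. GP t s * sg p1 p2 s) integrable_on {0..4*T}" for p1 p2
    by (rule prod_absint[OF cP4 asg])
  have eN: "integral {0..T} (\<lambda>s. GN t s * H s) = integral {0..4*T} (\<lambda>s. GP t s * sg 0 0 s)"
    unfolding sg_def
  proof (rule case_lemma[OF T n gN gP nrP4 _ _ aH t])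
    fix D k assume "bc_N n 0 T D" "k < 2*n" "odd (k + 0)"
    then show "D k T = 0" using odd_idx[of k n] unfolding bc_N_def by auto
  next
    fix D k assume "bc_N n 0 T D" "k < 2*n" "odd (k + 0)"
    then show "D k 0 = 0" using odd_idx[of k n] unfolding bc_N_def by auto
  qed
  have eD: "integral {0..T} (\<lambda>s. GD t s * H s) = integral {0..4*T} (\<lambda>s. GP t s * sg 1 1 s)"
    unfolding sg_def
  proof (rule case_lemma[OF T n gD gP nrP4 _ _ aH t])
    fix D k assume "bc_D n 0 T D" "k < 2*n" "odd (k + 1)"
    then show "D k T = 0" using even_idx[of k n] unfolding bc_D_def by auto
  next
    fix D k assume "bc_D n 0 T D" "k < 2*n" "odd (k + 1)"
    then show "D k 0 = 0" using even_idx[of k n] unfolding bc_D_def by auto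
  qed
  have eM1: "integral {0..T} (\<lambda>s. GM1 t s * H s) = integral {0..4*T} (\<lambda>s. GP t s * sg 1 0 s)"
    unfolding sg_def
  proof (rule case_lemma[OF T n gM1 gP nrP4 _ _ aH t])
    fix D k assume "bc_M1 n 0 T D" "k < 2*n" "odd (k + 1)"
    then show "D k T = 0" using even_idx[of k n] unfolding bc_M1_def by auto
  next
    fix D k assume "bc_M1 n 0 T D" "k < 2*n" "odd (k + 0)"
    then show "D k 0 = 0" using odd_idx[of k n] unfolding bc_M1_def by auto
  qed
  have eM2: "integral {0..T} (\<lambda>s. GM2 t s * H s) = integral {0..4*T} (\<lambda>s. GP t s * sg 0 1 s)"
    unfolding sg_def
  proof (rule case_lemma[OF T n gM2 gP nrP4 _ _ aH t])
    fix D k assume "bc_M2 n 0 T D" "k < 2*n" "odd (k + 0)"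
    then show "D k T = 0" using odd_idx[of k n] unfolding bc_M2_def by auto
  next
    fix D k assume "bc_M2 n 0 T D" "k < 2*n" "odd (k + 1)"
    then show "D k 0 = 0" using even_idx[of k n] unfolding bc_M2_def by auto
  qed
  have ssum: "sg 0 0 x + sg 1 1 x + sg 1 0 x + sg 0 1 x = (if x \<in> {0..T} then 4 * H x else 0)"
    if x: "x \<in> {0..4*T}" for x
    using x T unfolding sg_def reflS_def by auto
  have "integral {0..4*T} (\<lambda>s. GP t s * sg 0 0 s) + integral {0..4*T} (\<lambda>s. GP t s * sg 1 1 s)
      + integral {0..4*T} (\<lambda>s. GP t s * sg 1 0 s) + integral {0..4*T} (\<lambda>s. GP t s * sg 0 1 s)
      = integral {0..4*T} (\<lambda>s. GP t s * sg 0 0 s + GP t s * sg 1 1 s + GP t s * sg 1 0 s + GP t s * sg 0 1 s)"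
    using iP by (simp add: integral_add integrable_add)
  also have "\<dots> = integral {0..4*T} (\<lambda>s. if s \<in> {0..T} then 4 * (GP t s * H s) else 0)"
  proof (rule integral_cong)
    fix x assume x: "x \<in> {0..4*T}"
    have "GP t x * sg 0 0 x + GP t x * sg 1 1 x + GP t x * sg 1 0 x + GP t x * sg 0 1 x
        = GP t x * (sg 0 0 x + sg 1 1 x + sg 1 0 x + sg 0 1 x)" by (simp add: algebra_simps)
    then show "GP t x * sg 0 0 x + GP t x * sg 1 1 x + GP t x * sg 1 0 x + GP t x * sg 0 1 x =
        (if x \<in> {0..T} then 4 * (GP t x * H x) else 0)" using ssum[OF x] by simp
  qed
  also have "\<dots> = integral ({0..T} \<inter> {0..4*T}) (\<lambda>s. 4 * (GP t s * H s))"
    by (rule integral_restrict_Int)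
  also have "{0..T} \<inter> {0..4*T} = {0..T}" using T by auto
  finally have sumI: "integral {0..T} (\<lambda>s. GN t s * H s) + integral {0..T} (\<lambda>s. GD t s * H s)
      + integral {0..T} (\<lambda>s. GM1 t s * H s) + integral {0..T} (\<lambda>s. GM2 t s * H s)
      = 4 * integral {0..T} (\<lambda>s. GP t s * H s)"
    unfolding eN eD eM1 eM2 by simp
  have hP: "((\<lambda>s. GP t s * H s) has_integral integral {0..T} (\<lambda>s. GP t s * H s)) {0..T}"
    by (intro integrable_integral integrable_continuous_interval continuous_intros cP cH)
  have hN: "((\<lambda>s. GN t s * H s) has_integral integral {0..T} (\<lambda>s. GN t s * H s)) {0..T}"
    by (intro integrable_integral integrable_continuous_interval continuous_intros cN cH)
  have hD: "((\<lambda>s. GD t s * H s) has_integral integral {0..T} (\<lambda>s. GD t s * H s)) {0..T}"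
    by (intro integrable_integral integrable_continuous_interval continuous_intros cD cH)
  have hM1: "((\<lambda>s. GM1 t s * H s) has_integral integral {0..T} (\<lambda>s. GM1 t s * H s)) {0..T}"
    by (intro integrable_integral integrable_continuous_interval continuous_intros cM1 cH)
  have hM2: "((\<lambda>s. GM2 t s * H s) has_integral integral {0..T} (\<lambda>s. GM2 t s * H s)) {0..T}"
    by (intro integrable_integral integrable_continuous_interval continuous_intros cM2 cH)
  have "((\<lambda>s. GP t s * H s - (GN t s * H s + GD t s * H s + GM1 t s * H s + GM2 t s * H s) / 4) has_integral
      (integral {0..T} (\<lambda>s. GP t s * H s) - (integral {0..T} (\<lambda>s. GN t s * H s) + integral {0..T} (\<lambda>s. GD t s * H s)
      + integral {0..T} (\<lambda>s. GM1 t s * H s) + integral {0..T} (\<lambda>s. GM2 t s * H s)) / 4)) {0..T}"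
    by (intro has_integral_diff has_integral_divide has_integral_add hP hN hD hM1 hM2)
  moreover have "(\<lambda>s. GP t s * H s - (GN t s * H s + GD t s * H s + GM1 t s * H s + GM2 t s * H s) / 4) = (\<lambda>s. H s * H s)"
  proof (rule ext)
    fix x
    have "\<And>p b c d e h :: real. p * h - (b * h + c * h + d * h + e * h) / 4 = (p - (b + c + d + e) / 4) * h"
      by (simp add: field_simps)
    then show "GP t x * H x - (GN t x * H x + GD t x * H x + GM1 t x * H x + GM2 t x * H x) / 4 = H x * H x"
      by (simp only: H_def[of x, symmetric])
  qed
  ultimately have h0: "((\<lambda>s. H s * H s) has_integral 0) {0..T}" unfolding sumI by simp
  have "H s * H s = 0"
  proof (rule has_integral_0_cbox_imp_0[of 0 T "\<lambda>s. H s * H s"])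
    show "continuous_on (cbox 0 T) (\<lambda>s. H s * H s)" using cH by (auto intro!: continuous_intros)
    show "((\<lambda>s. H s * H s) has_integral 0) (cbox 0 T)" using h0 by simp
    show "box 0 T \<noteq> {}" using T by simp
    show "s \<in> cbox 0 T" using s by simp
  qed simp
  then have "H s = 0" by simp
  then show "GP t s = (GN t s + GD t s + GM1 t s + GM2 t s) / 4" unfolding H_def by simp
qed

end
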